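(* For every odd integer $n \ge 3$, the sets $S_{0,0}(n)$ and $S_{1,1}(n)$ have the same cardinality.
   Context: For $n \ge 2$, let $\mathcal{I}_n$ be the set of all irreducible polynomials of degree $n$ in $\mathbb{F}_2[x]$. Every $f \in \mathcal{I}_n$ is monic with constant term $1$; write $f = x^n + f_{n-1}x^{n-1} + \cdots + f_1 x + 1$ with $f_k \in \mathbb{F}_2$. The coefficient $f_{n-1}$ is the trace of $f$ and $f_1$ is its cotrace. For $i,j \in \mathbb{F}_2$, $S_{i,j}(n)$ denotes the set of $f \in \mathcal{I}_n$ with $f_{n-1} = i$ and $f_1 = j$. *)

theory Defs
  imports "HOL-Library.Z2" "HOL-Computational_Algebra.Polynomial"
begin

definition irr_polys :: "nat \<Rightarrow> bit poly set" where
  "irr_polys n = {f. irreducible f \<and> lead_coeff f = 1 \<and> degree f = n}"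

text \<open>S i j n: irreducible f of degree n with trace coeff f (n-1) = i and cotrace coeff f 1 = j.\<close>
definition S :: "bit \<Rightarrow> bit \<Rightarrow> nat \<Rightarrow> bit poly set" where
  "S i j n = {f \<in> irr_polys n. coeff f (n - 1) = i \<and> coeff f 1 = j}"

end

theory Submission
  imports Defs
begin

lemma unit_deg: "(p :: bit poly) dvd 1 \<longleftrightarrow> p \<noteq> 0 \<and> degree p = 0"
proof (cases "p = 0")
  case True
  then show ?thesis by (simp only: True dvd_0_left_iff) simp
next
  case False
  then show ?thesis using is_unit_iff_degree[OF False] by blast
qed

lemma coeff_shift_aux:
  fixes p :: "'a::idom poly"
  shows "degree p \<ge> 1 \<Longrightarrow> coeff (pcompose p [:c,1:]) (degree p - 1)
     = coeff p (degree p - 1) + of_nat (degree p) * c * lead_coeff p"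
proof (induction p)
  case 0
  then show ?case by simp
next
  case (pCons a r)
  show ?case
  proof (cases "r = 0")
    case True
    then show ?thesis using pCons by simp
  next
    case False
    define g where "g = pcompose r [:c,1:]"
    have dp: "degree (pCons a r) = Suc (degree r)" using False by simp
    have lc: "coeff g (degree r) = lead_coeff r"
    proof -
      have "degree g = degree r" unfolding g_def by (simp add: degree_pcompose)
      moreover have "lead_coeff g = lead_coeff r" unfolding g_def
        by (subst lead_coeff_comp) auto
      ultimately show ?thesis by simp
    qed
    have eq: "pcompose (pCons a r) [:c,1:] = [:a:] + (smult c g + pCons 0 g)"
      by (simp add: pcompose_pCons g_def)
    show ?thesis
    proof (cases "degree r = 0")
      case True
      then show ?thesis using dp lc by (simp add: eq algebra_simps)
    next
      case F2: False
      then have ih: "coeff g (degree r - 1) = coeff r (degree r - 1) + of_nat (degree r) * c * lead_coeff r"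
        using pCons.IH g_def by simp
      have "coeff (pcompose (pCons a r) [:c,1:]) (degree (pCons a r) - 1)
          = c * lead_coeff r + coeff g (degree r - 1)"
        using dp lc F2 by (simp add: eq coeff_pCons split: nat.splits)
      also have "\<dots> = coeff (pCons a r) (degree (pCons a r) - 1) + of_nat (degree (pCons a r)) * c * lead_coeff (pCons a r)"
        using ih dp F2 False by (simp add: coeff_pCons algebra_simps split: nat.splits)
      finally show ?thesis .
    qed
  qed
qed

definition sh :: "bit poly \<Rightarrow> bit poly" where
  "sh p = pcompose p [:1,1:]"

lemma sh_sh: "sh (sh p) = p"
proof -
  have "pcompose [:1,1:] [:1,1::bit:] = [:0,1:]"
    by (simp add: pcompose_pCons)
  then show ?thesis unfolding sh_def by (metis pcompose_assoc pcompose_idR)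
qed

lemma degree_sh[simp]: "degree (sh p) = degree p"
  by (simp add: sh_def degree_pcompose)

lemma sh_eq_0[simp]: "sh p = 0 \<longleftrightarrow> p = 0"
  unfolding sh_def by (rule pcompose_eq_0_iff) simp

lemma sh_mult: "sh (a * b) = sh a * sh b"
  by (simp add: sh_def pcompose_mult)

lemma lead_sh[simp]: "lead_coeff (sh p) = lead_coeff p"
proof -
  have "lead_coeff (sh p) = lead_coeff p * lead_coeff [:1,1::bit:] ^ degree p"
    unfolding sh_def by (rule lead_coeff_comp) simp
  moreover have "lead_coeff [:1,1::bit:] = 1" by simp
  ultimately show ?thesis by (simp only: power_one mult_1_right)
qed

lemma irr_sh: assumes "irreducible f" shows "irreducible (sh f)"
proof (rule irreducibleI)
  show "sh f \<noteq> 0" using assms by auto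
  show "\<not> sh f dvd 1" using assms irreducible_not_unit[OF assms]
    by (simp add: unit_deg)
  fix a b assume "sh f = a * b"
  then have "f = sh a * sh b" by (metis sh_sh sh_mult)
  then have "sh a dvd 1 \<or> sh b dvd 1" using irreducibleD[OF assms] by blast
  then show "a dvd 1 \<or> b dvd 1" by (simp add: unit_deg)
qed

lemma of_nat_odd_bit: "odd n \<Longrightarrow> (of_nat n :: bit) = 1"
  by (elim oddE) simp

lemma coeff_sh: "degree p \<ge> 1 \<Longrightarrow> coeff (sh p) (degree p - 1)
     = coeff p (degree p - 1) + of_nat (degree p) * lead_coeff p"
  using coeff_shift_aux[of p 1] by (simp add: sh_def)

lemma coeff0_irr: assumes "irreducible (f :: bit poly)" "degree f \<ge> 2" shows "coeff f 0 \<noteq> 0"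
proof
  assume c: "coeff f 0 = 0"
  obtain a g where fg: "f = pCons a g" by (cases f) auto
  with c have "a = 0" by simp
  then have "f = [:0,1:] * g" using fg by simp
  then have "[:0,1:] dvd (1::bit poly) \<or> g dvd 1" using irreducibleD[OF assms(1)] by blast
  moreover have "g \<noteq> 0" using \<open>f = [:0,1:] * g\<close> assms by auto
  ultimately have "degree g = 0" by (auto simp: unit_deg)
  then show False using \<open>f = [:0,1:] * g\<close> assms(2) \<open>g \<noteq> 0\<close> by (simp add: degree_mult_eq)
qed

lemma irr_reflect: assumes "irreducible (f :: bit poly)" "degree f \<ge> 2" shows "irreducible (reflect_poly f)"
proof (rule irreducibleI)
  have c0: "coeff f 0 \<noteq> 0" using coeff0_irr[OF assms] .
  show "reflect_poly f \<noteq> 0" using assms by auto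
  show "\<not> reflect_poly f dvd 1" using assms c0 by (simp add: unit_deg del: bit_not_zero_iff)
  fix a b assume ab: "reflect_poly f = a * b"
  have "coeff (reflect_poly f) 0 \<noteq> 0" using assms(1)
    by (simp only: coeff_0_reflect_poly_0_iff) auto
  then have "coeff (a * b) 0 \<noteq> 0" using ab by simp
  then have a0: "coeff a 0 \<noteq> 0" and b0: "coeff b 0 \<noteq> 0" by (auto simp: coeff_mult simp del: bit_not_zero_iff)
  have "f = reflect_poly a * reflect_poly b" using ab c0 by (metis reflect_poly_mult reflect_poly_reflect_poly)
  then have "reflect_poly a dvd 1 \<or> reflect_poly b dvd 1" using irreducibleD[OF assms(1)] by blast
  then show "a dvd 1 \<or> b dvd 1" using a0 b0 by (auto simp: unit_deg simp del: bit_not_zero_iff)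
qed

lemma refl_S: assumes "f \<in> S i j n" "n \<ge> 3" shows "reflect_poly f \<in> S j i n"
proof -
  have f: "irreducible f" "lead_coeff f = 1" "degree f = n" "coeff f (n-1) = i" "coeff f 1 = j"
    using assms(1) by (auto simp: S_def irr_polys_def)
  have c0: "coeff f 0 \<noteq> 0" using coeff0_irr[of f] f assms(2) by simp
  have "irreducible (reflect_poly f)" using irr_reflect[of f] f assms(2) by simp
  moreover have "degree (reflect_poly f) = n" using c0 f by simp
  moreover have "lead_coeff (reflect_poly f) = 1" using c0 f by (simp add: coeff_reflect_poly)
  moreover have "coeff (reflect_poly f) (n-1) = j" using f assms(2) by (simp add: coeff_reflect_poly)
  moreover have "coeff (reflect_poly f) 1 = i" using f assms(2) by (simp add: coeff_reflect_poly)
  ultimately show ?thesis by (simp add: S_def irr_polys_def)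
qed

lemma refl_refl: assumes "f \<in> S i j n" "n \<ge> 3" shows "reflect_poly (reflect_poly f) = f"
proof -
  have "coeff f 0 \<noteq> 0" using coeff0_irr[of f] assms by (simp add: S_def irr_polys_def)
  then show ?thesis by simp
qed

lemma card_S_swap: assumes "n \<ge> 3" shows "card (S i j n) = card (S j i n)"
proof -
  have "bij_betw reflect_poly (S i j n) (S j i n)"
    by (rule bij_betw_byWitness[where f'=reflect_poly]) (auto intro: refl_S refl_refl assms)
  then show ?thesis by (rule bij_betw_same_card)
qed

definition T :: "bit \<Rightarrow> nat \<Rightarrow> bit poly set" where
  "T i n = {f \<in> irr_polys n. coeff f (n - 1) = i}"

lemma sh_T: assumes "f \<in> T i n" "odd n" shows "sh f \<in> T (i + 1) n"
proof -
  have f: "irreducible f" "lead_coeff f = 1" "degree f = n" "coeff f (n-1) = i"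
    using assms(1) by (auto simp: T_def irr_polys_def)
  have "n \<ge> 1" using assms(2) by (cases n) auto
  then have "coeff (sh f) (n-1) = i + 1" using coeff_sh[of f] f of_nat_odd_bit[OF assms(2)] by simp
  then show ?thesis using f irr_sh[of f] lead_sh[of f] degree_sh[of f] by (simp add: T_def irr_polys_def)
qed

lemma card_T: assumes "odd n" shows "card (T 0 n) = card (T 1 n)"
proof -
  have "bij_betw sh (T 0 n) (T 1 n)"
  proof (rule bij_betw_byWitness[where f'=sh])
    show "sh ` T 0 n \<subseteq> T 1 n" using sh_T[OF _ assms, of _ 0] by auto
    show "sh ` T 1 n \<subseteq> T 0 n" using sh_T[OF _ assms, of _ 1] by auto
  qed (auto simp: sh_sh)
  then show ?thesis by (rule bij_betw_same_card)
qed

lemma T_split: "T i n = S i 0 n \<union> S i 1 n"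
  unfolding T_def S_def by (auto simp del: bit_not_zero_iff)

lemma poly_repr: "degree (p :: bit poly) \<le> n \<Longrightarrow> p = Poly (map (coeff p) [0..<Suc n])"
  by (auto simp: poly_eq_iff nth_default_def coeff_eq_0 simp del: upt_Suc)

lemma finite_irr: "finite (irr_polys n)"
proof -
  have "irr_polys n \<subseteq> Poly ` {xs. set xs \<subseteq> UNIV \<and> length xs = Suc n}"
  proof
    fix p assume "p \<in> irr_polys n"
    then have "degree p \<le> n" by (simp add: irr_polys_def)
    then show "p \<in> Poly ` {xs. set xs \<subseteq> UNIV \<and> length xs = Suc n}"
      using poly_repr[of p n] by (intro image_eqI[where x="map (coeff p) [0..<Suc n]"]) auto
  qed
  moreover have "finite {xs. set xs \<subseteq> (UNIV :: bit set) \<and> length xs = Suc n}"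
  proof (rule finite_lists_length_eq)
    have "(UNIV :: bit set) = {0, 1}" using bit_not_zero_iff by blast
    then show "finite (UNIV :: bit set)" by (metis finite.emptyI finite.insertI)
  qed
  ultimately show ?thesis by (meson finite_imageI finite_subset)
qed

lemma finite_S: "finite (S i j n)"
  using finite_irr by (rule rev_finite_subset) (auto simp: S_def)

lemma card_T_split: "card (T i n) = card (S i 0 n) + card (S i 1 n)"
  unfolding T_split by (rule card_Un_disjoint[OF finite_S finite_S]) (auto simp: S_def)

theorem theorem1:
  fixes n :: nat
  assumes "odd n" and "n \<ge> 3"
  shows "card (S 0 0 n) = card (S 1 1 n)"
  using card_T[OF assms(1)] card_T_split[of 0 n] card_T_split[of 1 n] card_S_swap[OF assms(2), of 0 1]
  by simp

end
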